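(* Let $a=(a_i)_{i\in\mathbb Z}$ be any sequence of complex numbers. If $\mu,\lambda$ are Young diagrams with $\mu\not\subseteq\lambda$, then $s_{\mu;a}(x(\lambda);y(\lambda))=0$.
   Context: $\Lambda$ is the algebra of symmetric functions over $\mathbb C$ with complete homogeneous $h_k$, elementary $e_k$, power sums $\mathbf p_k$. For a sequence $a$ define $h_{k;a}=\sum_{i=1}^k(-1)^{k-i}e_{k-i}(a_1,\dots,a_{k-1})h_i$ ($k\ge1$), $h_{0;a}=1$, $h_{k;a}=0$ ($k<0$); $(\tau^ra)_i=a_{i+r}$; $s_{\mu;a}=\det[h_{\mu_i-i+j;\,\tau^{1-j}a}]_{i,j=1}^N$ for any $N\ge\ell(\mu)$. Dual sequence: $\widehat a_i=-a_{1-i}$. Each $f\in\Lambda$ is evaluated at $(x;y)\in\mathbb C^d\times\mathbb C^d$ via $\mathbf p_k\mapsto\sum_ix_i^k+(-1)^{k-1}\sum_jy_j^k$. For a nonempty diagram $\lambda=(p_1,\dots,p_d\mid q_1,\dots,q_d)$ in Frobenius notation ($p_i=\lambda_i-i$, $q_i=\lambda'_i-i$, $d$ the number of diagonal boxes), set $(x(\lambda);y(\lambda))=(a_{p_1+1},\dots,a_{p_d+1};\widehat a_{q_1+1},\dots,\widehat a_{q_d+1})\in\mathbb C^d\times\mathbb C^d$; and $(x(\varnothing);y(\varnothing))=(0;0)$. *)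

theory Defs
  imports Complex_Main "Jordan_Normal_Form.Determinant"
begin

definition young :: "nat list \<Rightarrow> bool" where
  "young \<mu> \<longleftrightarrow> sorted_wrt (\<ge>) \<mu> \<and> 0 \<notin> set \<mu>"

text \<open>Row lengths, 1-based: part \<mu> i = \<mu>_i (0 beyond the length).\<close>
definition part :: "nat list \<Rightarrow> nat \<Rightarrow> nat" where
  "part \<mu> i = (if 1 \<le> i \<and> i \<le> length \<mu> then \<mu> ! (i - 1) else 0)"

definition conjpart :: "nat list \<Rightarrow> nat \<Rightarrow> nat" where
  "conjpart lam i = card {j. 1 \<le> j \<and> j \<le> length lam \<and> i \<le> part lam j}"

definition diagram_subset :: "nat list \<Rightarrow> nat list \<Rightarrow> bool" where
  "diagram_subset \<mu> lam \<longleftrightarrow> (\<forall>i. part \<mu> i \<le> part lam i)"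

definition diag :: "nat list \<Rightarrow> nat" where
  "diag lam = card {i. 1 \<le> i \<and> i \<le> length lam \<and> i \<le> part lam i}"

definition shift :: "int \<Rightarrow> (int \<Rightarrow> complex) \<Rightarrow> int \<Rightarrow> complex" where
  "shift r a = (\<lambda>i. a (i + r))"

definition dual_seq :: "(int \<Rightarrow> complex) \<Rightarrow> int \<Rightarrow> complex" where
  "dual_seq a = (\<lambda>i. - a (1 - i))"

definition esym :: "nat \<Rightarrow> nat \<Rightarrow> (int \<Rightarrow> complex) \<Rightarrow> complex" where
  "esym m n a = (\<Sum>S\<in>{S. S \<subseteq> {1..n} \<and> card S = m}. \<Prod>j\<in>S. a (int j))"

text \<open>Image of the power sum p_k under the evaluation at (x;y).\<close>
definition psum_ev :: "complex list \<Rightarrow> complex list \<Rightarrow> nat \<Rightarrow> complex" where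
  "psum_ev xs ys k = (\<Sum>x\<leftarrow>xs. x ^ k) + (-1) ^ (k - 1) * (\<Sum>y\<leftarrow>ys. y ^ k)"

text \<open>Images of h_0,...,h_n, determined from the power sums by Newton's identities
  k h_k = sum_{i=1}^k p_i h_{k-i} (which hold in Lambda).\<close>
fun hlist_ev :: "complex list \<Rightarrow> complex list \<Rightarrow> nat \<Rightarrow> complex list" where
  "hlist_ev xs ys 0 = [1]"
| "hlist_ev xs ys (Suc n) = hlist_ev xs ys n @
     [(\<Sum>i=1..Suc n. psum_ev xs ys i * (hlist_ev xs ys n ! (Suc n - i))) / of_nat (Suc n)]"

definition h_ev :: "complex list \<Rightarrow> complex list \<Rightarrow> nat \<Rightarrow> complex" where
  "h_ev xs ys k = hlist_ev xs ys k ! k"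

text \<open>Image of h_{k;a} at (x;y).\<close>
definition hfac_ev :: "(int \<Rightarrow> complex) \<Rightarrow> int \<Rightarrow> complex list \<Rightarrow> complex list \<Rightarrow> complex" where
  "hfac_ev a k xs ys =
     (if k < 0 then 0 else if k = 0 then 1 else
      (\<Sum>i=1..nat k. (-1) ^ (nat k - i) * esym (nat k - i) (nat k - 1) a * h_ev xs ys i))"

text \<open>Image of s_{\<mu>;a} at (x;y): since evaluation is a ring homomorphism, it is the
  determinant of the evaluated entries (taking N = length \<mu>).\<close>
definition schur_ev :: "nat list \<Rightarrow> (int \<Rightarrow> complex) \<Rightarrow> complex list \<Rightarrow> complex list \<Rightarrow> complex" where
  "schur_ev \<mu> a xs ys =
     det (mat (length \<mu>) (length \<mu>)
       (\<lambda>(i, j). hfac_ev (shift (1 - int (Suc j)) a)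
                   (int (part \<mu> (Suc i)) - int (Suc i) + int (Suc j)) xs ys))"

text \<open>(x(\<lambda>); y(\<lambda>)) via Frobenius coordinates p_i = \<lambda>_i - i, q_i = \<lambda>'_i - i.\<close>
definition xpt :: "(int \<Rightarrow> complex) \<Rightarrow> nat list \<Rightarrow> complex list" where
  "xpt a lam = map (\<lambda>i. a (int (part lam i - i) + 1)) [1..<diag lam + 1]"

definition ypt :: "(int \<Rightarrow> complex) \<Rightarrow> nat list \<Rightarrow> complex list" where
  "ypt a lam = map (\<lambda>i. dual_seq a (int (conjpart lam i - i) + 1)) [1..<diag lam + 1]"

end

theory Submission
  imports Defs "HOL-Computational_Algebra.Formal_Power_Series"
begin


definition geo :: "complex \<Rightarrow> complex fps" where
  "geo c = Abs_fps (\<lambda>n. c ^ n)"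

lemma geo_mult: "geo c * (1 - fps_const c * fps_X) = 1"
proof (rule fps_ext)
  fix n
  show "fps_nth (geo c * (1 - fps_const c * fps_X)) n = fps_nth (1::complex fps) n"
  proof -
    have e: "geo c * (1 - fps_const c * fps_X) = geo c - fps_X * (fps_const c * geo c)"
      by (simp add: algebra_simps)
    show ?thesis unfolding e by (cases n) (auto simp: geo_def)
  qed
qed

lemma hlist_length: "length (hlist_ev xs ys n) = Suc n"
  by (induction n) auto

lemma hlist_stable: "k \<le> n \<Longrightarrow> hlist_ev xs ys (n + m) ! k = hlist_ev xs ys n ! k"
proof (induction m)
  case 0 then show ?case by simp
next
  case (Suc m)
  have "hlist_ev xs ys (n + Suc m) ! k = hlist_ev xs ys (n + m) ! k"
    using Suc.prems by (simp add: nth_append hlist_length)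
  with Suc show ?case by simp
qed

lemma h_ev_Suc: "h_ev xs ys (Suc n) =
   (\<Sum>i=1..Suc n. psum_ev xs ys i * h_ev xs ys (Suc n - i)) / of_nat (Suc n)"
proof -
  have "h_ev xs ys (Suc n) = (\<Sum>i=1..Suc n. psum_ev xs ys i * (hlist_ev xs ys n ! (Suc n - i))) / of_nat (Suc n)"
    by (simp add: h_ev_def nth_append hlist_length)
  also have "(\<Sum>i=1..Suc n. psum_ev xs ys i * (hlist_ev xs ys n ! (Suc n - i)))
      = (\<Sum>i=1..Suc n. psum_ev xs ys i * h_ev xs ys (Suc n - i))"
  proof (rule sum.cong[OF refl])
    fix i assume "i \<in> {1..Suc n}"
    then have "hlist_ev xs ys n ! (Suc n - i) = hlist_ev xs ys ((Suc n - i) + (n - (Suc n - i))) ! (Suc n - i)"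
      by simp
    also have "\<dots> = h_ev xs ys (Suc n - i)"
      unfolding h_ev_def by (rule hlist_stable) simp
    finally show "psum_ev xs ys i * (hlist_ev xs ys n ! (Suc n - i)) = psum_ev xs ys i * h_ev xs ys (Suc n - i)"
      by simp
  qed
  finally show ?thesis .
qed

lemma h_ev_0: "h_ev xs ys 0 = 1" by (simp add: h_ev_def)

definition LD :: "complex fps \<Rightarrow> complex fps \<Rightarrow> bool" where
  "LD F Q \<longleftrightarrow> fps_X * fps_deriv F = F * Q"

lemma LD_mult: "LD F1 Q1 \<Longrightarrow> LD F2 Q2 \<Longrightarrow> LD (F1 * F2) (Q1 + Q2)"
  unfolding LD_def by (simp add: fps_deriv_mult algebra_simps)

lemma LD_one: "LD 1 0" unfolding LD_def by simp

definition Px :: "complex \<Rightarrow> complex fps" where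
  "Px c = Abs_fps (\<lambda>k. if k = 0 then 0 else c ^ k)"
definition Py :: "complex \<Rightarrow> complex fps" where
  "Py c = Abs_fps (\<lambda>k. if k = 0 then 0 else (-1) ^ (k - 1) * c ^ k)"

lemma LD_geo: "LD (geo c) (Px c)"
  unfolding LD_def
proof (rule fps_ext)
  fix n
  show "fps_nth (fps_X * fps_deriv (geo c)) n = fps_nth (geo c * Px c) n"
  proof (cases n)
    case 0 then show ?thesis by (simp add: geo_def Px_def fps_mult_nth)
  next
    case (Suc m)
    have "fps_nth (geo c * Px c) n = (\<Sum>i=0..Suc m. c ^ i * (if Suc m - i = 0 then 0 else c ^ (Suc m - i)))"
      by (simp add: Suc geo_def Px_def fps_mult_nth)
    also have "\<dots> = (\<Sum>i=0..m. c ^ Suc m)"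
    proof -
      have "(\<Sum>i=0..Suc m. c ^ i * (if Suc m - i = 0 then 0 else c ^ (Suc m - i)))
          = (\<Sum>i=0..m. c ^ i * (if Suc m - i = 0 then 0 else c ^ (Suc m - i)))"
        by (simp add: sum.atLeast0_atMost_Suc)
      also have "\<dots> = (\<Sum>i=0..m. c ^ Suc m)"
      proof (rule sum.cong[OF refl])
        fix i assume i: "i \<in> {0..m}"
        then have "c ^ i * c ^ (Suc m - i) = c ^ (i + (Suc m - i))" by (simp only: power_add)
        also have "\<dots> = c ^ Suc m" using i by simp
        finally show "c ^ i * (if Suc m - i = 0 then 0 else c ^ (Suc m - i)) = c ^ Suc m"
          using i by simp
      qed
      finally show ?thesis .
    qed
    finally show ?thesis by (simp add: Suc geo_def)
  qed
qed

lemma LD_lin: "LD (1 + fps_const c * fps_X) (Py c)"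
  unfolding LD_def
proof (rule fps_ext)
  fix n
  show "fps_nth (fps_X * fps_deriv (1 + fps_const c * fps_X)) n = fps_nth ((1 + fps_const c * fps_X) * Py c) n"
  proof (cases n)
    case 0 then show ?thesis by (simp add: Py_def fps_mult_nth)
  next
    case (Suc m)
    show ?thesis
    proof (cases m)
      case 0 then show ?thesis by (simp add: Suc Py_def algebra_simps fps_mult_nth)
    next
      case (Suc k)
      then show ?thesis using \<open>n = Suc m\<close>
        by (simp add: Py_def algebra_simps)
    qed
  qed
qed

lemma LD_list: "(\<And>x. LD (f x) (q x)) \<Longrightarrow> LD (prod_list (map f l)) (sum_list (map q l))"
  by (induction l) (auto intro: LD_mult LD_one)

lemma fps_nth_sum_list: "fps_nth (sum_list (map q l)) k = sum_list (map (\<lambda>x. fps_nth (q x) k) l)"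
  by (induction l) auto

definition Tser :: "complex list \<Rightarrow> complex list \<Rightarrow> complex fps" where
  "Tser xs ys = prod_list (map (\<lambda>y. 1 + fps_const y * fps_X) ys) * prod_list (map geo xs)"

lemma LD_T: "LD (Tser xs ys) (Abs_fps (\<lambda>k. if k = 0 then 0 else psum_ev xs ys k))"
proof -
  have "LD (Tser xs ys) (sum_list (map Py ys) + sum_list (map Px xs))"
    unfolding Tser_def by (intro LD_mult LD_list LD_lin LD_geo)
  moreover have "sum_list (map Py ys) + sum_list (map Px xs) = Abs_fps (\<lambda>k. if k = 0 then 0 else psum_ev xs ys k)"
  proof (rule fps_ext)
    fix k
    show "fps_nth (sum_list (map Py ys) + sum_list (map Px xs)) k = fps_nth (Abs_fps (\<lambda>k. if k = 0 then 0 else psum_ev xs ys k)) k"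
      by (simp add: fps_nth_sum_list Py_def Px_def psum_ev_def sum_list_const_mult)
  qed
  ultimately show ?thesis by simp
qed

lemma fps_nth_prod_list_0: "fps_nth (prod_list (map f l)) 0 = prod_list (map (\<lambda>x. fps_nth (f x) 0) l)"
  by (induction l) auto

lemma prod_list_map_1: "prod_list (map (\<lambda>x. 1) l) = 1"
  by (induction l) auto

lemma T_0: "fps_nth (Tser xs ys) 0 = 1"
  by (simp add: Tser_def fps_nth_prod_list_0 geo_def o_def prod_list_map_1)

lemma T_eq_h: "fps_nth (Tser xs ys) k = h_ev xs ys k"
proof (induction k rule: less_induct)
  case (less k)
  show ?case
  proof (cases k)
    case 0 then show ?thesis by (simp add: T_0 h_ev_0)
  next
    case (Suc n)
    let ?T = "Tser xs ys" and ?P = "Abs_fps (\<lambda>k. if k = 0 then 0 else psum_ev xs ys k)"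
    have "fps_nth (fps_X * fps_deriv ?T) (Suc n) = fps_nth (?T * ?P) (Suc n)"
      using LD_T unfolding LD_def by simp
    moreover have "fps_nth (fps_X * fps_deriv ?T) (Suc n) = of_nat (Suc n) * fps_nth ?T (Suc n)"
      by simp
    moreover have "fps_nth (?T * ?P) (Suc n) = (\<Sum>i=0..Suc n. fps_nth ?T i * fps_nth ?P (Suc n - i))"
      by (rule fps_mult_nth)
    ultimately have e: "of_nat (Suc n) * fps_nth ?T (Suc n) = (\<Sum>i=0..Suc n. fps_nth ?T i * fps_nth ?P (Suc n - i))"
      by simp
    have "(\<Sum>i=0..Suc n. fps_nth ?T i * fps_nth ?P (Suc n - i)) = (\<Sum>i=0..n. fps_nth ?T i * psum_ev xs ys (Suc n - i))"
      by (simp add: sum.atLeast0_atMost_Suc)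
    also have "\<dots> = (\<Sum>i=0..n. h_ev xs ys i * psum_ev xs ys (Suc n - i))"
      using less Suc by (intro sum.cong) auto
    also have "\<dots> = (\<Sum>i=1..Suc n. psum_ev xs ys i * h_ev xs ys (Suc n - i))"
    proof -
      have "(\<Sum>i=1..Suc n. psum_ev xs ys i * h_ev xs ys (Suc n - i)) = (\<Sum>i=0..n. psum_ev xs ys (Suc n - i) * h_ev xs ys (Suc n - (Suc n - i)))"
        by (rule sum.reindex_bij_witness[of _ "\<lambda>i. Suc n - i" "\<lambda>i. Suc n - i"]) auto
      also have "\<dots> = (\<Sum>i=0..n. h_ev xs ys i * psum_ev xs ys (Suc n - i))"
        by (intro sum.cong) auto
      finally show ?thesis by simp
    qed
    finally have "of_nat (Suc n) * fps_nth ?T (Suc n) = (\<Sum>i=1..Suc n. psum_ev xs ys i * h_ev xs ys (Suc n - i))"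
      using e by simp
    then have "fps_nth ?T (Suc n) = (\<Sum>i=1..Suc n. psum_ev xs ys i * h_ev xs ys (Suc n - i)) / of_nat (Suc n)"
      by (simp add: field_simps del: of_nat_Suc)
    then show ?thesis using Suc h_ev_Suc by simp
  qed
qed

lemma T_mult: "Tser xs ys * prod_list (map (\<lambda>x. 1 - fps_const x * fps_X) xs) = prod_list (map (\<lambda>y. 1 + fps_const y * fps_X) ys)"
proof -
  have "prod_list (map geo xs) * prod_list (map (\<lambda>x. 1 - fps_const x * fps_X) xs) = 1"
  proof (induction xs)
    case (Cons a xs)
    have "prod_list (map geo (a#xs)) * prod_list (map (\<lambda>x. 1 - fps_const x * fps_X) (a#xs))
       = (geo a * (1 - fps_const a * fps_X)) * (prod_list (map geo xs) * prod_list (map (\<lambda>x. 1 - fps_const x * fps_X) xs))"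
      by (simp add: ac_simps)
    then show ?case using Cons geo_mult by simp
  qed simp
  then show ?thesis unfolding Tser_def by (simp add: mult.assoc)
qed



definition psi :: "complex fps \<Rightarrow> complex poly \<Rightarrow> complex" where
  "psi G F = (\<Sum>n\<le>degree F. coeff F n * fps_nth G (Suc n))"

lemma psi_bound: "degree F < K \<Longrightarrow> psi G F = (\<Sum>n<K. coeff F n * fps_nth G (Suc n))"
  unfolding psi_def
  by (rule sum.mono_neutral_left) (auto simp: coeff_eq_0)

lemma psi_add: "psi G (P + Q) = psi G P + psi G Q"
proof -
  define K where "K = Suc (max (degree P) (degree Q))"
  have "degree (P + Q) < K" unfolding K_def using degree_add_le_max[of P Q] by simp
  then show ?thesis
    by (simp add: psi_bound[where K=K] K_def sum.distrib algebra_simps less_Suc_eq_le)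
qed

lemma psi_smult: "psi G (smult c F) = c * psi G F"
  by (simp add: psi_bound[where K="Suc (degree F)"] sum_distrib_left algebra_simps less_Suc_eq_le)

lemma psi_0: "psi G 0 = 0" by (simp add: psi_def)

lemma psi_sum: "finite S \<Longrightarrow> psi G (\<Sum>s\<in>S. f s) = (\<Sum>s\<in>S. psi G (f s))"
  by (induction S rule: finite_induct) (auto simp: psi_0 psi_add)

lemma psi_one: "psi 1 F = 0" by (simp add: psi_def)

lemma fps_nth_mult_lin: fixes H :: "complex fps" shows "fps_nth (H * (1 - fps_const c * fps_X)) (Suc n) = fps_nth H (Suc n) - c * fps_nth H n"
proof -
  have "H * (1 - fps_const c * fps_X) = H - (H * fps_const c) * fps_X" by (simp add: right_diff_distrib mult.assoc)
  then show ?thesis by (simp add: mult.commute)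
qed

lemma psi_peel: fixes H :: "complex fps" shows "psi (fps_X * H) ([:-c, 1:] * F) = psi (H * (1 - fps_const c * fps_X)) F"
proof -
  define K where "K = Suc (degree F)"
  have d: "degree ([:-c, 1:] * F) < Suc K"
    unfolding K_def using degree_mult_le[of "[:-c, 1:]" F] by (cases "F = 0") auto
  have e: "[:-c, 1:] * F = smult (-c) F + pCons 0 F"
    by (simp add: mult_pCons_left)
  have "psi (fps_X * H) ([:-c, 1:] * F) = (\<Sum>n<Suc K. coeff ([:-c, 1:] * F) n * fps_nth H n)"
    using psi_bound[OF d] by simp
  also have "\<dots> = (\<Sum>n<Suc K. (- c) * coeff F n * fps_nth H n) + (\<Sum>n<Suc K. coeff (pCons 0 F) n * fps_nth H n)"
    unfolding e coeff_add coeff_smult by (simp only: sum.distrib[symmetric] distrib_right)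
  also have "(\<Sum>n<Suc K. coeff (pCons 0 F) n * fps_nth H n) = (\<Sum>n<K. coeff F n * fps_nth H (Suc n))"
    by (subst sum.lessThan_Suc_shift) simp
  also have "(\<Sum>n<Suc K. (- c) * coeff F n * fps_nth H n) = (\<Sum>n<K. (- c) * coeff F n * fps_nth H n)"
    by (simp add: K_def coeff_eq_0)
  also have "(\<Sum>n<K. (- c) * coeff F n * fps_nth H n) + (\<Sum>n<K. coeff F n * fps_nth H (Suc n))
      = (\<Sum>n<K. coeff F n * fps_nth (H * (1 - fps_const c * fps_X)) (Suc n))"
    by (simp add: fps_nth_mult_lin sum.distrib[symmetric] algebra_simps)
  also have "\<dots> = psi (H * (1 - fps_const c * fps_X)) F"
    by (rule psi_bound[symmetric]) (simp add: K_def)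
  finally show ?thesis .
qed

lemma psi_peel_set:
  assumes "finite S"
  shows "psi (fps_X ^ (card S + k) * g) ((\<Prod>l\<in>S. [:- z l, 1:]) * F)
       = psi (fps_X ^ k * g * (\<Prod>l\<in>S. 1 - fps_const (z l) * fps_X)) F"
  using assms
proof (induction S arbitrary: g rule: finite_induct)
  case empty then show ?case by simp
next
  case (insert x S)
  have "psi (fps_X ^ (card (insert x S) + k) * g) ((\<Prod>l\<in>insert x S. [:- z l, 1:]) * F)
      = psi (fps_X * (fps_X ^ (card S + k) * g)) ([:- z x, 1:] * ((\<Prod>l\<in>S. [:- z l, 1:]) * F))"
    using insert by (simp add: mult.assoc del: mult_pCons_left)
  also have "\<dots> = psi (fps_X ^ (card S + k) * (g * (1 - fps_const (z x) * fps_X))) ((\<Prod>l\<in>S. [:- z l, 1:]) * F)"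
    unfolding psi_peel by (simp only: mult.assoc)
  also have "\<dots> = psi (fps_X ^ k * (g * (1 - fps_const (z x) * fps_X)) * (\<Prod>l\<in>S. 1 - fps_const (z l) * fps_X)) F"
    by (rule insert.IH)
  also have "\<dots> = psi (fps_X ^ k * g * (\<Prod>l\<in>insert x S. 1 - fps_const (z l) * fps_X)) F"
    using insert by (simp add: ac_simps)
  finally show ?case .
qed

lemma esym_gt: "n < m \<Longrightarrow> esym m n b = 0"
proof -
  assume "n < m"
  have E: "{S. S \<subseteq> {1..n} \<and> card S = m} = {}"
  proof (rule ccontr)
    assume "{S. S \<subseteq> {1..n} \<and> card S = m} \<noteq> {}"
    then obtain S where "S \<subseteq> {1..n}" "card S = m" by auto
    then have "card S \<le> n" using card_mono[of "{1..n}" S] by simp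
    with \<open>n < m\<close> \<open>card S = m\<close> show False by simp
  qed
  show ?thesis unfolding esym_def by (simp only: E sum.empty)
qed

lemma esym_0: "esym 0 n b = 1"
proof -
  have "{S. S \<subseteq> {1..n} \<and> card S = 0} = {{}}"
    by (auto dest: finite_subset)
  then show ?thesis by (simp add: esym_def)
qed

lemma esym_Suc: "esym (Suc m) (Suc n) b = esym (Suc m) n b + b (int (Suc n)) * esym m n b"
proof -
  let ?P = "\<lambda>n k. {S. S \<subseteq> {1..(n::nat)} \<and> card S = (k::nat)}"
  let ?Q = "?P (Suc n) (Suc m)"
  have fin: "finite (?P n k)" for n k by (rule finite_subset[of _ "Pow {1..n}"]) auto
  have inj: "inj_on (insert (Suc n)) (?P n m)"
    by (rule inj_onI) (metis Suc_n_not_le_n atLeastAtMost_iff insert_ident mem_Collect_eq subsetD)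
  have disjoint: "insert (Suc n) ` ?P n m \<inter> ?P n (Suc m) = {}"
    by auto
  have split: "?Q = insert (Suc n) ` ?P n m \<union> ?P n (Suc m)"
  proof (rule Set.set_eqI)
    fix K
    show "K \<in> ?Q \<longleftrightarrow> K \<in> insert (Suc n) ` ?P n m \<union> ?P n (Suc m)"
    proof
      assume K: "K \<in> ?Q"
      have fK: "finite K" using K by (auto intro: finite_subset)
      show "K \<in> insert (Suc n) ` ?P n m \<union> ?P n (Suc m)"
      proof (cases "Suc n \<in> K")
        case True
        have "K - {Suc n} \<in> ?P n m"
          using K True fK by (auto simp: card_Diff_singleton subset_iff)
        moreover have "K = insert (Suc n) (K - {Suc n})" using True by auto
        ultimately show ?thesis by blast
      next
        case False
        then have "K \<in> ?P n (Suc m)" using K by (auto simp: subset_iff le_Suc_eq)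
        then show ?thesis by blast
      qed
    next
      assume "K \<in> insert (Suc n) ` ?P n m \<union> ?P n (Suc m)"
      then show "K \<in> ?Q"
      proof
        assume "K \<in> insert (Suc n) ` ?P n m"
        then obtain L where L: "L \<in> ?P n m" "K = insert (Suc n) L" by auto
        have "finite L" using L by (auto intro: finite_subset)
        moreover have "Suc n \<notin> L" using L by auto
        ultimately show ?thesis using L by auto
      next
        assume "K \<in> ?P n (Suc m)" then show ?thesis by auto
      qed
    qed
  qed
  have "esym (Suc m) (Suc n) b = (\<Sum>S\<in>insert (Suc n) ` ?P n m. \<Prod>j\<in>S. b (int j)) + (\<Sum>S\<in>?P n (Suc m). \<Prod>j\<in>S. b (int j))"
    unfolding esym_def split by (rule sum.union_disjoint) (use fin disjoint in auto)
  also have "(\<Sum>S\<in>insert (Suc n) ` ?P n m. \<Prod>j\<in>S. b (int j)) = (\<Sum>S\<in>?P n m. \<Prod>j\<in>insert (Suc n) S. b (int j))"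
    by (rule sum.reindex[OF inj, unfolded comp_def])
  also have "\<dots> = (\<Sum>S\<in>?P n m. b (int (Suc n)) * (\<Prod>j\<in>S. b (int j)))"
  proof (rule sum.cong[OF refl])
    fix S assume S: "S \<in> ?P n m"
    then have "finite S" "Suc n \<notin> S" by (auto intro: finite_subset)
    then show "(\<Prod>j\<in>insert (Suc n) S. b (int j)) = b (int (Suc n)) * (\<Prod>j\<in>S. b (int j))" by simp
  qed
  finally show ?thesis by (simp add: esym_def sum_distrib_left)
qed

lemma vieta: "coeff (\<Prod>j\<in>{1..n}. [:- b (int j), 1:]) s = (if s \<le> n then (-1) ^ (n - s) * esym (n - s) n b else 0)"
proof (induction n arbitrary: s)
  case 0
  then show ?case by (cases s) (auto simp: esym_0)
next
  case (Suc n)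
  let ?p = "\<Prod>j\<in>{1..n}. [:- b (int j), 1:]"
  let ?c = "b (int (Suc n))"
  have "(\<Prod>j\<in>{1..Suc n}. [:- b (int j), 1:]) = [:- ?c, 1:] * ?p"
    by (simp add: prod.cl_ivl_Suc mult.commute)
  also have "\<dots> = smult (- ?c) ?p + pCons 0 ?p" by (simp add: mult_pCons_left)
  finally have e: "coeff (\<Prod>j\<in>{1..Suc n}. [:- b (int j), 1:]) s = - ?c * coeff ?p s + coeff (pCons 0 ?p) s"
    by simp
  show ?case
  proof (cases s)
    case 0
    then show ?thesis using e Suc.IH[of 0] by (simp add: esym_Suc esym_gt coeff_pCons)
  next
    case (Suc s')
    show ?thesis
    proof (cases "s' < n")
      case True
      then have ns: "n - s' = Suc (n - s)" using Suc by simp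
      show ?thesis using e Suc.IH[of s] Suc.IH[of s'] True \<open>s = Suc s'\<close>
        by (simp add: ns esym_Suc algebra_simps)
    next
      case False
      show ?thesis
      proof (cases "s' = n")
        case True
        then show ?thesis using e Suc.IH[of s] Suc.IH[of s'] \<open>s = Suc s'\<close> by (simp add: esym_0)
      next
        case False
        then show ?thesis using e Suc.IH[of s] Suc.IH[of s'] \<open>s = Suc s'\<close> \<open>\<not> s' < n\<close> by simp
      qed
    qed
  qed
qed

lemma degree_lin_prod: "degree (\<Prod>j\<in>S. [:- f j, 1::complex:]) = card S"
  by (cases "finite S") (simp_all add: degree_prod_eq_sum_degree)

lemma hfac_psi:
  "hfac_ev b (int (Suc n)) xs ys = psi (Tser xs ys) (\<Prod>j\<in>{1..n}. [:- b (int j), 1:])"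
proof -
  have "psi (Tser xs ys) (\<Prod>j\<in>{1..n}. [:- b (int j), 1:])
     = (\<Sum>m<Suc n. coeff (\<Prod>j\<in>{1..n}. [:- b (int j), 1:]) m * h_ev xs ys (Suc m))"
    by (subst psi_bound[where K="Suc n"]) (simp_all add: degree_lin_prod T_eq_h)
  also have "\<dots> = (\<Sum>m<Suc n. (-1) ^ (n - m) * esym (n - m) n b * h_ev xs ys (Suc m))"
    by (intro sum.cong refl, subst vieta, simp)
  also have "\<dots> = (\<Sum>i=1..Suc n. (-1) ^ (Suc n - i) * esym (Suc n - i) n b * h_ev xs ys i)"
    by (rule sum.reindex_bij_witness[of _ "\<lambda>i. i - 1" Suc]) auto
  moreover have "hfac_ev b (int (Suc n)) xs ys = (\<Sum>i=1..Suc n. (-1) ^ (Suc n - i) * esym (Suc n - i) n b * h_ev xs ys i)"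
    unfolding hfac_ev_def nat_int by (simp del: of_nat_Suc)
  ultimately show ?thesis by simp
qed



lemma young_mono:
  assumes y: "young lam" and "1 \<le> i" "i \<le> j"
  shows "part lam j \<le> part lam i"
proof (cases "j \<le> length lam")
  case True
  have s: "sorted_wrt (\<ge>) lam" using y by (simp add: young_def)
  show ?thesis
  proof (cases "i = j")
    case False
    then have "i - 1 < j - 1" using assms by simp
    then have "lam ! (j - 1) \<le> lam ! (i - 1)"
      using sorted_wrt_nth_less[OF s, of "i - 1" "j - 1"] True by simp
    then show ?thesis using True assms by (simp add: part_def)
  qed simp
next
  case False
  then show ?thesis by (simp add: part_def)
qed

lemma part_pos: "young lam \<Longrightarrow> 1 \<le> i \<Longrightarrow> i \<le> length lam \<Longrightarrow> 0 < part lam i"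
proof -
  assume y: "young lam" and i: "1 \<le> i" "i \<le> length lam"
  then have "lam ! (i - 1) \<in> set lam" by (intro nth_mem) simp
  moreover have "0 \<notin> set lam" using y by (simp add: young_def)
  ultimately have "lam ! (i - 1) \<noteq> 0" by metis
  then show ?thesis using i by (simp add: part_def)
qed

lemma part_pos_len: "0 < part lam i \<Longrightarrow> 1 \<le> i \<and> i \<le> length lam"
  unfolding part_def by (auto split: if_splits)

lemma diag_iff:
  assumes y: "young lam" and i: "1 \<le> i"
  shows "i \<le> diag lam \<longleftrightarrow> i \<le> part lam i"
proof -
  define S where "S = {i. 1 \<le> i \<and> i \<le> length lam \<and> i \<le> part lam i}"
  have fin: "finite S" unfolding S_def by auto
  have memS: "i \<in> S \<longleftrightarrow> 1 \<le> i \<and> i \<le> part lam i" for i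
    unfolding S_def using part_pos_len[of lam i] by auto
  show ?thesis
  proof (cases "S = {}")
    case True
    have dS: "diag lam = card S" unfolding diag_def S_def ..
    have d0: "diag lam = 0" unfolding dS True by simp
    have "i \<notin> S" using True by blast
    then show ?thesis using memS[of i] i d0 by auto
  next
    case False
    define m where "m = Max S"
    have "m \<in> S" using False fin m_def by simp
    have "S = {1..m}"
    proof (rule Set.set_eqI)
      fix x
      show "x \<in> S \<longleftrightarrow> x \<in> {1..m}"
      proof
        assume "x \<in> S" then show "x \<in> {1..m}" using fin m_def memS by auto
      next
        assume x: "x \<in> {1..m}"
        then have "part lam m \<le> part lam x" using young_mono[OF y] by auto
        moreover have "m \<le> part lam m" using \<open>m \<in> S\<close> memS by auto
        ultimately show "x \<in> S" using x memS by auto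
      qed
    qed
    have dS: "diag lam = card S" unfolding diag_def S_def ..
    then have "diag lam = m" using \<open>S = {1..m}\<close> by simp
    then show ?thesis using \<open>S = {1..m}\<close> memS[of i] i by auto
  qed
qed

lemma diag_le: "diag lam \<le> length lam"
proof -
  have "diag lam \<le> card {1..length lam}" unfolding diag_def by (rule card_mono) auto
  then show ?thesis by simp
qed

lemma cp_ge:
  assumes y: "young lam" and "1 \<le> l" "1 \<le> i" "i \<le> part lam l"
  shows "l \<le> conjpart lam i"
proof -
  have "l \<le> length lam" using part_pos_len[of lam l] assms by simp
  have "{1..l} \<subseteq> {j. 1 \<le> j \<and> j \<le> length lam \<and> i \<le> part lam j}"
  proof
    fix j assume "j \<in> {1..l}"
    then show "j \<in> {j. 1 \<le> j \<and> j \<le> length lam \<and> i \<le> part lam j}"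
      using young_mono[OF y, of j l] assms \<open>l \<le> length lam\<close> by auto
  qed
  then have "card {1..l} \<le> conjpart lam i"
    unfolding conjpart_def by (rule card_mono[rotated]) auto
  then show ?thesis by simp
qed

lemma cp_le:
  assumes y: "young lam" and "1 \<le> l" "part lam l < i"
  shows "conjpart lam i \<le> l - 1"
proof -
  have "{j. 1 \<le> j \<and> j \<le> length lam \<and> i \<le> part lam j} \<subseteq> {1..l - 1}"
  proof
    fix j assume j: "j \<in> {j. 1 \<le> j \<and> j \<le> length lam \<and> i \<le> part lam j}"
    have "j < l"
    proof (rule ccontr)
      assume "\<not> j < l"
      then have "part lam j \<le> part lam l" using young_mono[OF y, of l j] assms by auto
      then show False using j assms by auto
    qed
    then show "j \<in> {1..l - 1}" using j by auto
  qed
  then have "conjpart lam i \<le> card {1..l - 1}"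
    unfolding conjpart_def by (rule card_mono[rotated]) auto
  then show ?thesis by simp
qed

lemma cp_len: "conjpart lam i \<le> length lam"
proof -
  have "conjpart lam i \<le> card {1..length lam}" unfolding conjpart_def by (rule card_mono) auto
  then show ?thesis by simp
qed

lemma cp_mono: "i \<le> i' \<Longrightarrow> conjpart lam i' \<le> conjpart lam i"
  unfolding conjpart_def by (rule card_mono) auto

definition sfr :: "nat list \<Rightarrow> nat \<Rightarrow> int" where
  "sfr lam l = int (part lam l) - int l + 1"
definition qfr :: "nat list \<Rightarrow> nat \<Rightarrow> int" where
  "qfr lam i = int (conjpart lam i) - int i"

lemma sfr_mono: "young lam \<Longrightarrow> 1 \<le> l \<Longrightarrow> l < l' \<Longrightarrow> sfr lam l' < sfr lam l"
  unfolding sfr_def using young_mono[of lam l l'] by auto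

lemma sfr_mono_le: "young lam \<Longrightarrow> 1 \<le> l \<Longrightarrow> l \<le> l' \<Longrightarrow> sfr lam l' \<le> sfr lam l"
  using sfr_mono[of lam l l'] by (cases "l = l'") auto

lemma sfr_pos_iff: "young lam \<Longrightarrow> 1 \<le> l \<Longrightarrow> (1 \<le> sfr lam l \<longleftrightarrow> l \<le> diag lam)"
  unfolding sfr_def using diag_iff[of lam l] by auto

lemma qfr_mono: "young lam \<Longrightarrow> 1 \<le> i \<Longrightarrow> i < i' \<Longrightarrow> qfr lam i' < qfr lam i"
  unfolding qfr_def using cp_mono[of i i' lam] by auto

lemma qfr_nonneg: "young lam \<Longrightarrow> 1 \<le> i \<Longrightarrow> i \<le> diag lam \<Longrightarrow> 0 \<le> qfr lam i"
  unfolding qfr_def using diag_iff[of lam i] cp_ge[of lam i i] by auto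

lemma sfr_qfr: "young lam \<Longrightarrow> 1 \<le> l \<Longrightarrow> 1 \<le> i \<Longrightarrow> sfr lam l \<noteq> - qfr lam i"
proof -
  assume y: "young lam" and l: "1 \<le> l" and i: "1 \<le> i"
  show ?thesis
  proof (cases "i \<le> part lam l")
    case True
    then have "l \<le> conjpart lam i" using cp_ge[OF y l i] by simp
    then show ?thesis using True unfolding sfr_def qfr_def by linarith
  next
    case False
    then have "conjpart lam i \<le> l - 1" using cp_le[OF y l] by simp
    then show ?thesis using False l unfolding sfr_def qfr_def by linarith
  qed
qed

lemma prod_int_split:
  fixes f :: "int \<Rightarrow> 'a::comm_monoid_mult"
  assumes "lo \<le> mid + 1" "mid \<le> hi"
  shows "prod f {lo..hi} = prod f {lo..mid} * prod f {mid + 1..hi}"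
proof -
  have "{lo..hi} = {lo..mid} \<union> {mid + 1..hi}" using assms by auto
  then show ?thesis by (simp add: prod.union_disjoint)
qed

lemma comb_prod:
  fixes f :: "int \<Rightarrow> 'a::comm_monoid_mult"
  assumes y: "young lam" and M: "length lam \<le> M"
  shows "(\<Prod>i\<in>{1..diag lam}. f (- qfr lam i)) * (\<Prod>l\<in>{1..M}. f (sfr lam l))
       = (\<Prod>m\<in>{1 - int M..0}. f m) * (\<Prod>i\<in>{1..diag lam}. f (sfr lam i))"
proof -
  let ?d = "diag lam"
  have dM: "?d \<le> M" using diag_le[of lam] M by simp
  have inj_s: "inj_on (sfr lam) {1..M}"
  proof (rule inj_onI)
    fix u v assume "u \<in> {1..M}" "v \<in> {1..M}" "sfr lam u = sfr lam v"
    then show "u = v" using sfr_mono[OF y, of u v] sfr_mono[OF y, of v u]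
      by (cases u v rule: linorder_cases) auto
  qed
  have inj_q: "inj_on (\<lambda>i. - qfr lam i) {1..?d}"
  proof (rule inj_onI)
    fix u v assume "u \<in> {1..?d}" "v \<in> {1..?d}" "- qfr lam u = - qfr lam v"
    then show "u = v" using qfr_mono[OF y, of u v] qfr_mono[OF y, of v u]
      by (cases u v rule: linorder_cases) auto
  qed
  have split: "{1..M} = {1..?d} \<union> {Suc ?d..M}" using dM by auto
  have ps: "(\<Prod>l\<in>{1..M}. f (sfr lam l)) = (\<Prod>l\<in>{1..?d}. f (sfr lam l)) * (\<Prod>l\<in>{Suc ?d..M}. f (sfr lam l))"
    unfolding split by (rule prod.union_disjoint) auto
  let ?Q = "(\<lambda>i. - qfr lam i) ` {1..?d}" and ?S = "sfr lam ` {Suc ?d..M}"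
  have Qsub: "?Q \<subseteq> {1 - int M..0}"
  proof
    fix m assume "m \<in> ?Q"
    then obtain i where i: "i \<in> {1..?d}" "m = - qfr lam i" by auto
    have "0 \<le> qfr lam i" using qfr_nonneg[OF y] i by auto
    moreover have "qfr lam i \<le> int M - 1"
      using cp_len[of lam i] M i unfolding qfr_def by auto
    ultimately show "m \<in> {1 - int M..0}" using i by auto
  qed
  have Ssub: "?S \<subseteq> {1 - int M..0}"
  proof
    fix m assume "m \<in> ?S"
    then obtain l where l: "l \<in> {Suc ?d..M}" "m = sfr lam l" by auto
    have "\<not> 1 \<le> sfr lam l" using sfr_pos_iff[OF y, of l] l by auto
    moreover have "1 - int M \<le> sfr lam l" using l unfolding sfr_def by auto
    ultimately show "m \<in> {1 - int M..0}" using l by auto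
  qed
  have disj: "?Q \<inter> ?S = {}"
  proof (rule equals0I)
    fix m assume "m \<in> ?Q \<inter> ?S"
    then obtain i l where "i \<in> {1..?d}" "l \<in> {Suc ?d..M}" "m = - qfr lam i" "m = sfr lam l" by auto
    then show False using sfr_qfr[OF y, of l i] by auto
  qed
  have cQ: "card ?Q = ?d" using card_image[OF inj_q] by simp
  have cS: "card ?S = M - ?d"
    using card_image[OF inj_on_subset[OF inj_s, of "{Suc ?d..M}"]] by auto
  have un: "?Q \<union> ?S = {1 - int M..0}"
  proof (rule card_subset_eq)
    show "finite {1 - int M..0}" by simp
    show "?Q \<union> ?S \<subseteq> {1 - int M..0}" using Qsub Ssub by auto
    show "card (?Q \<union> ?S) = card {1 - int M..0}"
      using card_Un_disjoint[of ?Q ?S] disj cQ cS dM by simp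
  qed
  have "(\<Prod>i\<in>{1..?d}. f (- qfr lam i)) * (\<Prod>l\<in>{Suc ?d..M}. f (sfr lam l))
      = prod f ?Q * prod f ?S"
    using prod.reindex[OF inj_q, of f] prod.reindex[OF inj_on_subset[OF inj_s, of "{Suc ?d..M}"], of f]
    by (simp add: o_def)
  also have "\<dots> = prod f {1 - int M..0}"
    using prod.union_disjoint[of ?Q ?S f] disj un by simp
  finally have key: "(\<Prod>i\<in>{1..?d}. f (- qfr lam i)) * (\<Prod>l\<in>{Suc ?d..M}. f (sfr lam l)) = prod f {1 - int M..0}" .
  show ?thesis unfolding ps using key by (simp add: ac_simps)
qed



abbreviation lf :: "(int \<Rightarrow> complex) \<Rightarrow> int \<Rightarrow> complex fps" where
  "lf a m \<equiv> 1 - fps_const (a m) * fps_X"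

lemma prod_list_upt_set: "prod_list (map g [m..<k]) = prod g {m..<k}"
  by (metis distinct_upt prod.distinct_set_conv_list set_upt)

lemma fps_prod_nth0: "fps_nth (\<Prod>i\<in>S. f i) 0 = (\<Prod>i\<in>S. fps_nth (f i) 0)"
proof (cases "finite S")
  case True then show ?thesis by (induction S rule: finite_induct) auto
qed simp

lemma T_eq_N_hh:
  assumes y: "young lam" and M: "length lam \<le> M"
  shows "Tser (xpt a lam) (ypt a lam) = (\<Prod>m\<in>{1 - int M..0}. lf a m) * (\<Prod>l\<in>{1..M}. geo (a (sfr lam l)))"
proof -
  let ?d = "diag lam"
  let ?T = "Tser (xpt a lam) (ypt a lam)"
  let ?Xd = "\<Prod>i\<in>{1..?d}. lf a (sfr lam i)"
  let ?Yq = "\<Prod>i\<in>{1..?d}. lf a (- qfr lam i)"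
  let ?Zs = "\<Prod>l\<in>{1..M}. lf a (sfr lam l)"
  let ?hh = "\<Prod>l\<in>{1..M}. geo (a (sfr lam l))"
  let ?N = "\<Prod>m\<in>{1 - int M..0}. lf a m"
  have xs: "prod_list (map (\<lambda>x. 1 - fps_const x * fps_X) (xpt a lam)) = ?Xd"
  proof -
    have "prod_list (map (\<lambda>x. 1 - fps_const x * fps_X) (xpt a lam))
        = (\<Prod>i\<in>{1..<?d+1}. 1 - fps_const (a (int (part lam i - i) + 1)) * fps_X)"
      by (simp add: xpt_def o_def prod_list_upt_set)
    also have "\<dots> = ?Xd"
    proof (rule prod.cong)
      fix i assume "i \<in> {1..?d}"
      then have "i \<le> part lam i" using diag_iff[OF y, of i] by auto
      then show "1 - fps_const (a (int (part lam i - i) + 1)) * fps_X = lf a (sfr lam i)"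
        by (simp add: sfr_def of_nat_diff)
    qed auto
    finally show ?thesis .
  qed
  have ys: "prod_list (map (\<lambda>y. 1 + fps_const y * fps_X) (ypt a lam)) = ?Yq"
  proof -
    have "prod_list (map (\<lambda>y. 1 + fps_const y * fps_X) (ypt a lam))
        = (\<Prod>i\<in>{1..<?d+1}. 1 + fps_const (dual_seq a (int (conjpart lam i - i) + 1)) * fps_X)"
      by (simp add: ypt_def o_def prod_list_upt_set)
    also have "\<dots> = ?Yq"
    proof (rule prod.cong)
      fix i assume i: "i \<in> {1..?d}"
      then have "0 \<le> qfr lam i" using qfr_nonneg[OF y] by auto
      then have "i \<le> conjpart lam i" unfolding qfr_def by simp
      then have "dual_seq a (int (conjpart lam i - i) + 1) = - a (- qfr lam i)"
        by (simp add: dual_seq_def qfr_def of_nat_diff)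
      then show "1 + fps_const (dual_seq a (int (conjpart lam i - i) + 1)) * fps_X = lf a (- qfr lam i)"
        by (simp flip: fps_const_neg)
    qed auto
    finally show ?thesis .
  qed
  have T1: "?T * ?Xd = ?Yq" using T_mult[of "xpt a lam" "ypt a lam"] xs ys by simp
  have comb: "?Yq * ?Zs = ?N * ?Xd" using comb_prod[OF y M, of "lf a"] by simp
  have "?Xd * (?T * ?Zs) = (?T * ?Xd) * ?Zs" by (simp only: ac_simps)
  also have "\<dots> = ?Yq * ?Zs" by (simp only: T1)
  also have "\<dots> = ?N * ?Xd" by (rule comb)
  also have "\<dots> = ?Xd * ?N" by (rule mult.commute)
  finally have "?Xd * (?T * ?Zs) = ?Xd * ?N" .
  moreover have "?Xd \<noteq> 0"
  proof
    assume A: "?Xd = 0"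
    have "fps_nth ?Xd 0 = 0" unfolding A by simp
    moreover have "fps_nth ?Xd 0 = 1" by (simp add: fps_prod_nth0)
    ultimately show False by simp
  qed
  ultimately have TZ: "?T * ?Zs = ?N" by simp
  have Zh: "?Zs * ?hh = 1"
    by (simp add: prod.distrib[symmetric] mult.commute[of "lf a _"] geo_mult)
  have "?T = ?T * (?Zs * ?hh)" using Zh by simp
  also have "\<dots> = ?N * ?hh" using TZ by (simp add: mult.assoc[symmetric])
  finally show ?thesis .
qed



lemma card_int_ivl: "card {1 - int j..(0::int)} = j"
  by simp

lemma lin_nz: "[:- c, 1::complex:] \<noteq> 0" by simp

lemma prod_lin_nz: "finite S \<Longrightarrow> (\<Prod>m\<in>S. [:- f m, 1::complex:]) \<noteq> 0"
  by (simp add: prod_zero_iff)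

lemma lc_prod_lin: "lead_coeff (\<Prod>m\<in>S. [:- f m, 1::complex:]) = 1"
  by (simp add: lead_coeff_prod)

lemma reindex_shift:
  assumes "0 \<le> \<kappa> + int j"
  shows "(\<Prod>t\<in>{1..nat (\<kappa> + int j)}. [:- a (int t - int j), 1::complex:]) = (\<Prod>m\<in>{1 - int j..\<kappa>}. [:- a m, 1:])"
  by (rule prod.reindex_bij_witness[of _ "\<lambda>m. nat (m + int j)" "\<lambda>t. int t - int j"]) (use assms in auto)

lemma entry:
  fixes a :: "int \<Rightarrow> complex" and hh :: "complex fps"
  assumes T: "Tser xs ys = (\<Prod>m\<in>{1 - int M..0}. lf a m) * hh"
    and h0: "fps_nth hh 0 = 1" and M1: "1 \<le> M" and kM: "- int M \<le> \<kappa>"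
  shows "hfac_ev (shift (1 - int (Suc j)) a) (\<kappa> + int (Suc j)) xs ys
       = psi (fps_X ^ M * hh) ((\<Prod>m\<in>{1 - int j..0}. [:- a m, 1:]) * (\<Prod>m\<in>{1 - int M..\<kappa>}. [:- a m, 1:]))"
proof -
  define B where "B = (\<Prod>m\<in>{1 - int j..0}. [:- a m, 1:])"
  define D where "D = (\<Prod>m\<in>{1 - int M..\<kappa>}. [:- a m, 1:])"
  have Bnz: "B \<noteq> 0" unfolding B_def by (rule prod_lin_nz) simp
  have Dnz: "D \<noteq> 0" unfolding D_def by (rule prod_lin_nz) simp
  have degB: "degree B = j" unfolding B_def by (simp add: degree_lin_prod)
  have degD: "degree D = nat (\<kappa> + int M)" unfolding D_def by (simp add: degree_lin_prod)
  have degBD: "degree (B * D) = j + nat (\<kappa> + int M)"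
    using degree_mult_eq[OF Bnz Dnz] degB degD by simp
  have lcBD: "lead_coeff (B * D) = 1"
    unfolding lead_coeff_mult B_def D_def by (simp add: lc_prod_lin)
  show ?thesis
  proof (cases "\<kappa> + int j + 1 \<le> 0")
    case True
    obtain M' where M': "M = Suc M'" using M1 by (cases M) auto
    have dlt: "degree (B * D) < M" using True degBD kM by linarith
    have "psi (fps_X ^ M * hh) (B * D) = (\<Sum>m<M. coeff (B * D) m * fps_nth (fps_X ^ M * hh) (Suc m))"
      by (rule psi_bound[OF dlt])
    also have "\<dots> = coeff (B * D) M'"
      unfolding M' by (simp add: fps_X_power_mult_nth h0 del: power_Suc)
    finally have pv: "psi (fps_X ^ M * hh) (B * D) = coeff (B * D) M'" .
    show ?thesis
    proof (cases "\<kappa> + int j + 1 = 0")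
      case True
      then have "degree (B * D) = M'" using degBD M' kM by linarith
      then have "coeff (B * D) M' = 1" using lcBD by simp
      moreover have "hfac_ev (shift (1 - int (Suc j)) a) (\<kappa> + int (Suc j)) xs ys = 1"
        using True by (simp add: hfac_ev_def)
      ultimately show ?thesis using pv B_def D_def by simp
    next
      case False
      then have "degree (B * D) < M'" using \<open>\<kappa> + int j + 1 \<le> 0\<close> degBD M' kM by linarith
      then have "coeff (B * D) M' = 0" by (simp add: coeff_eq_0)
      moreover have "hfac_ev (shift (1 - int (Suc j)) a) (\<kappa> + int (Suc j)) xs ys = 0"
        using False \<open>\<kappa> + int j + 1 \<le> 0\<close> by (simp add: hfac_ev_def)
      ultimately show ?thesis using pv B_def D_def by simp
    qed
  next
    case False
    define n' where "n' = nat (\<kappa> + int j)"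
    have kn: "\<kappa> + int (Suc j) = int (Suc n')" using False unfolding n'_def by simp
    define P where "P = (\<Prod>m\<in>{1 - int j..\<kappa>}. [:- a m, 1:])"
    define W where "W = (\<Prod>m\<in>{1 - int M..0}. [:- a m, 1:])"
    have "hfac_ev (shift (1 - int (Suc j)) a) (\<kappa> + int (Suc j)) xs ys
        = psi (Tser xs ys) (\<Prod>t\<in>{1..n'}. [:- shift (1 - int (Suc j)) a (int t), 1:])"
      unfolding kn by (rule hfac_psi)
    also have "(\<Prod>t\<in>{1..n'}. [:- shift (1 - int (Suc j)) a (int t), 1:]) = P"
    proof -
      have "(\<Prod>t\<in>{1..n'}. [:- shift (1 - int (Suc j)) a (int t), 1:]) = (\<Prod>t\<in>{1..n'}. [:- a (int t - int j), 1:])"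
        by (intro prod.cong) (auto simp: shift_def algebra_simps)
      also have "\<dots> = P" unfolding n'_def P_def using False by (intro reindex_shift) simp
      finally show ?thesis .
    qed
    also have "psi (Tser xs ys) P = psi (fps_X ^ 0 * hh * (\<Prod>m\<in>{1 - int M..0}. lf a m)) P"
      unfolding T by (simp add: mult.commute)
    also have "\<dots> = psi (fps_X ^ (card {1 - int M..0} + 0) * hh) (W * P)"
      unfolding W_def by (rule psi_peel_set[symmetric]) simp
    also have "card {1 - int M..0} + 0 = M" by simp
    also have "W * P = B * D"
    proof (cases "0 \<le> \<kappa>")
      case True
      have "P = B * (\<Prod>m\<in>{0 + 1..\<kappa>}. [:- a m, 1:])"
        unfolding P_def B_def by (rule prod_int_split) (use True in auto)
      moreover have "D = W * (\<Prod>m\<in>{0 + 1..\<kappa>}. [:- a m, 1:])"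
        unfolding D_def W_def by (rule prod_int_split) (use True in auto)
      ultimately show ?thesis by (simp add: ac_simps)
    next
      case nk: False
      have "B = P * (\<Prod>m\<in>{\<kappa> + 1..0}. [:- a m, 1:])"
        unfolding P_def B_def by (rule prod_int_split) (use nk False in auto)
      moreover have "W = D * (\<Prod>m\<in>{\<kappa> + 1..0}. [:- a m, 1:])"
        unfolding D_def W_def by (rule prod_int_split) (use nk kM in auto)
      ultimately show ?thesis by (simp add: ac_simps)
    qed
    finally show ?thesis unfolding B_def D_def .
  qed
qed



lemma prod_geo_lf: "(\<Prod>l\<in>S. geo (z l)) * (\<Prod>l\<in>S. 1 - fps_const (z l) * fps_X) = 1"
  by (simp add: prod.distrib[symmetric] geo_mult)

lemma psi_Z_zero:
  assumes "finite S"
  shows "psi (fps_X ^ card S * (\<Prod>l\<in>S. geo (z l))) ((\<Prod>l\<in>S. [:- z l, 1:]) * F) = 0"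
proof -
  have "psi (fps_X ^ (card S + 0) * (\<Prod>l\<in>S. geo (z l))) ((\<Prod>l\<in>S. [:- z l, 1:]) * F)
      = psi (fps_X ^ 0 * (\<Prod>l\<in>S. geo (z l)) * (\<Prod>l\<in>S. 1 - fps_const (z l) * fps_X)) F"
    by (rule psi_peel_set[OF assms])
  also have "\<dots> = psi 1 F" by (simp add: prod_geo_lf)
  finally show ?thesis by (simp add: psi_one)
qed

lemma poly_monom_sum:
  assumes "p = 0 \<or> degree p < K"
  shows "p = (\<Sum>s<K. monom (coeff p s) s)"
proof (rule poly_eqI)
  fix t
  have "coeff (\<Sum>s<K. monom (coeff p s) s) t = (\<Sum>s<K. if s = t then coeff p s else 0)"
    by (simp add: coeff_sum coeff_monom)
  also have "\<dots> = (if t < K then coeff p t else 0)"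
    by (simp add: sum.delta')
  also have "\<dots> = coeff p t" using assms by (auto simp: coeff_eq_0)
  finally show "coeff p t = coeff (\<Sum>s<K. monom (coeff p s) s) t" by simp
qed

lemma psi_monom_sum:
  "psi G (B * (\<Sum>s<K. monom (c s) s)) = (\<Sum>s<K. c s * psi G (B * monom 1 s))"
proof -
  have "B * (\<Sum>s<K. monom (c s) s) = (\<Sum>s<K. smult (c s) (B * monom 1 s))"
  proof -
    have e: "B * monom (c s) s = smult (c s) (B * monom 1 s)" for s
    proof -
      have "monom (c s) s = smult (c s) (monom 1 s)" by (simp add: smult_monom)
      then show ?thesis by simp
    qed
    show ?thesis by (simp only: sum_distrib_left e)
  qed
  then show ?thesis by (simp add: psi_sum psi_smult)
qed

lemma det_zero_row_lemma:
  assumes Q: "Q \<in> carrier_mat n n" and k: "k < n" and z: "\<And>j. j < n \<Longrightarrow> Q $$ (k, j) = (0::complex)"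
  shows "det Q = 0"
proof -
  have zp: "\<And>p. p permutes {0..<n} \<Longrightarrow> (\<Prod>i = 0..<n. Q $$ (i, p i)) = 0"
  proof -
    fix p assume p: "p permutes {0..<n}"
    have "p k < n" using p k by (simp add: permutes_in_image)
    then have "Q $$ (k, p k) = 0" by (rule z)
    then show "(\<Prod>i = 0..<n. Q $$ (i, p i)) = 0"
      using k by (intro prod_zero) auto
  qed
  have "det Q = (\<Sum>p\<in>{p. p permutes {0..<n}}. signof p * (\<Prod>i = 0..<n. Q $$ (i, p i)))"
    unfolding det_def using Q by simp
  also have "\<dots> = 0" by (rule sum.neutral) (use zp in simp)
  finally show ?thesis .
qed



theorem theorem10:
  fixes a :: "int \<Rightarrow> complex" and \<mu> lam :: "nat list"
  assumes "young \<mu>" and "young lam" and "\<not> diagram_subset \<mu> lam"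
  shows "schur_ev \<mu> a (xpt a lam) (ypt a lam) = 0"
proof -
  note ymu = assms(1) and ylam = assms(2)
  define n where "n = length \<mu>"
  define M where "M = length \<mu> + length lam"
  define xs where "xs = xpt a lam"
  define ys where "ys = ypt a lam"
  obtain r where r: "part lam r < part \<mu> r"
    using assms(3) unfolding diagram_subset_def by (auto simp: not_le)
  have r1: "1 \<le> r" "r \<le> n" using part_pos_len[of \<mu> r] r unfolding n_def by auto
  have Mge: "1 \<le> M" "n \<le> M" "length lam \<le> M" "r \<le> M" using r1 unfolding M_def n_def by auto
  define z where "z l = a (sfr lam l)" for l
  define hh1 where "hh1 = (\<Prod>l\<in>{r..M}. geo (z l))"
  define hh2 where "hh2 = (\<Prod>l\<in>{1..<r}. geo (z l))"
  have hsplit: "(\<Prod>l\<in>{1..M}. geo (a (sfr lam l))) = hh2 * hh1"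
  proof -
    have U: "{1..M} = {1..<r} \<union> {r..M}" using r1 Mge by auto
    show ?thesis unfolding hh1_def hh2_def z_def U by (rule prod.union_disjoint) auto
  qed
  have T: "Tser xs ys = (\<Prod>m\<in>{1 - int M..0}. lf a m) * (hh2 * hh1)"
    using T_eq_N_hh[OF ylam Mge(3), of a] hsplit unfolding xs_def ys_def by simp
  have h0: "fps_nth (hh2 * hh1) 0 = 1"
    unfolding hh1_def hh2_def by (simp add: fps_mult_nth fps_prod_nth0 geo_def)
  define \<kappa> where "\<kappa> i = int (part \<mu> (Suc i)) - int (Suc i)" for i
  define Bp where "Bp j = (\<Prod>m\<in>{1 - int j..0}. [:- a m, 1:])" for j
  define G2 where "G2 = fps_X ^ (r - 1) * hh2"
  define Z2 where "Z2 = (\<Prod>l\<in>{1..<r}. [:- z l, 1:])"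
  define E where "E i = (\<Prod>m\<in>{1 - int M..\<kappa> i} - sfr lam ` {r..M}. [:- a m, 1:])" for i
  define C where "C i s = coeff (E i mod Z2) s" for i s
  define V where "V s j = psi G2 (Bp j * monom 1 s)" for s j
  define Am where "Am = mat n n (\<lambda>(i, j). hfac_ev (shift (1 - int (Suc j)) a)
                   (int (part \<mu> (Suc i)) - int (Suc i) + int (Suc j)) xs ys)"
  have sch: "schur_ev \<mu> a xs ys = det Am" unfolding schur_ev_def Am_def n_def by simp
  have Z2nz: "Z2 \<noteq> 0" unfolding Z2_def by (rule prod_lin_nz) simp
  have degZ2: "degree Z2 = r - 1" unfolding Z2_def by (simp add: degree_lin_prod)
  have psiZ2: "psi G2 (Z2 * F) = 0" for F
  proof -
    have "card {1..<r} = r - 1" by simp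
    then show ?thesis unfolding G2_def Z2_def hh2_def
      using psi_Z_zero[of "{1..<r}" z F] by simp
  qed
  have inj_s: "inj_on (sfr lam) {r..M}"
  proof (rule inj_onI)
    fix u v assume "u \<in> {r..M}" "v \<in> {r..M}" "sfr lam u = sfr lam v"
    then show "u = v" using sfr_mono[OF ylam, of u v] sfr_mono[OF ylam, of v u] r1
      by (cases u v rule: linorder_cases) auto
  qed
  have rows: "Am $$ (i, j) = (\<Sum>s<r - 1. C i s * V s j)" if i: "i < r" and j: "j < n" for i j
  proof -
    have iN: "i < n" using i r1 by simp
    have kM: "- int M \<le> \<kappa> i" unfolding \<kappa>_def using iN Mge by simp
    have "Am $$ (i, j) = hfac_ev (shift (1 - int (Suc j)) a) (\<kappa> i + int (Suc j)) xs ys"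
      unfolding Am_def \<kappa>_def using iN j by simp
    also have "\<dots> = psi (fps_X ^ M * (hh2 * hh1)) (Bp j * (\<Prod>m\<in>{1 - int M..\<kappa> i}. [:- a m, 1:]))"
      unfolding Bp_def by (rule entry[OF T h0 Mge(1) kM])
    also have "(\<Prod>m\<in>{1 - int M..\<kappa> i}. [:- a m, 1:]) = (\<Prod>l\<in>{r..M}. [:- z l, 1:]) * E i"
    proof -
      have sub: "sfr lam ` {r..M} \<subseteq> {1 - int M..\<kappa> i}"
      proof
        fix m assume "m \<in> sfr lam ` {r..M}"
        then obtain l where l: "l \<in> {r..M}" "m = sfr lam l" by auto
        have "sfr lam l \<le> sfr lam r" using sfr_mono_le[OF ylam, of r l] l r1 by auto
        moreover have "part \<mu> r \<le> part \<mu> (Suc i)" using young_mono[OF ymu, of "Suc i" r] i by simp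
        moreover have "1 - int M \<le> sfr lam l" using l unfolding sfr_def by auto
        ultimately show "m \<in> {1 - int M..\<kappa> i}" using l r i unfolding sfr_def \<kappa>_def by auto
      qed
      have "(\<Prod>m\<in>{1 - int M..\<kappa> i}. [:- a m, 1:])
          = (\<Prod>m\<in>{1 - int M..\<kappa> i} - sfr lam ` {r..M}. [:- a m, 1:]) * (\<Prod>m\<in>sfr lam ` {r..M}. [:- a m, 1:])"
        by (rule prod.subset_diff[OF sub]) simp
      also have "(\<Prod>m\<in>sfr lam ` {r..M}. [:- a m, 1:]) = (\<Prod>l\<in>{r..M}. [:- z l, 1:])"
        unfolding z_def using prod.reindex[OF inj_s, of "\<lambda>m. [:- a m, 1:]"] by (simp add: o_def)
      finally show ?thesis unfolding E_def by (simp add: mult.commute)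
    qed
    also have "psi (fps_X ^ M * (hh2 * hh1)) (Bp j * ((\<Prod>l\<in>{r..M}. [:- z l, 1:]) * E i))
        = psi (fps_X ^ (card {r..M} + (r - 1)) * (hh2 * hh1)) ((\<Prod>l\<in>{r..M}. [:- z l, 1:]) * (Bp j * E i))"
    proof -
      have "card {r..M} + (r - 1) = M" using r1 Mge by simp
      then show ?thesis by (simp add: ac_simps)
    qed
    also have "\<dots> = psi (fps_X ^ (r - 1) * (hh2 * hh1) * (\<Prod>l\<in>{r..M}. 1 - fps_const (z l) * fps_X)) (Bp j * E i)"
      by (rule psi_peel_set) simp
    also have "fps_X ^ (r - 1) * (hh2 * hh1) * (\<Prod>l\<in>{r..M}. 1 - fps_const (z l) * fps_X) = G2"
      unfolding G2_def hh1_def using prod_geo_lf[of z "{r..M}"] by (simp add: mult.assoc)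
    also have "psi G2 (Bp j * E i) = psi G2 (Bp j * (E i mod Z2))"
    proof -
      have "Bp j * E i = Z2 * (Bp j * (E i div Z2)) + Bp j * (E i mod Z2)"
        using div_mult_mod_eq[of "E i" Z2] by (metis distrib_left mult.commute mult.left_commute)
      then show ?thesis using psiZ2 by (simp add: psi_add)
    qed
    also have "E i mod Z2 = (\<Sum>s<r - 1. monom (C i s) s)"
      unfolding C_def
      by (rule poly_monom_sum) (use degree_mod_less[OF Z2nz, of "E i"] degZ2 in simp)
    also have "psi G2 (Bp j * (\<Sum>s<r - 1. monom (C i s) s)) = (\<Sum>s<r - 1. C i s * V s j)"
      unfolding V_def by (rule psi_monom_sum)
    finally show ?thesis .
  qed
  define \<rho> where "\<rho> = r - 1"
  have rho: "\<rho> < n" unfolding \<rho>_def using r1 by simp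
  define Pm where "Pm = mat n n (\<lambda>(i, s). if i \<le> \<rho> then (if s < \<rho> then C i s else 0) else (if s = i then 1 else 0))"
  define Qm where "Qm = mat n n (\<lambda>(s, j). if s < \<rho> then V s j else if s = \<rho> then 0 else Am $$ (s, j))"
  have PQ: "Am = Pm * Qm"
  proof (rule eq_matI)
    show "dim_row Am = dim_row (Pm * Qm)" unfolding Am_def Pm_def by simp
    show "dim_col Am = dim_col (Pm * Qm)" unfolding Am_def Qm_def by simp
    fix i j assume "i < dim_row (Pm * Qm)" "j < dim_col (Pm * Qm)"
    then have i: "i < n" and j: "j < n" unfolding Pm_def Qm_def by auto
    have "(Pm * Qm) $$ (i, j) = (\<Sum>s = 0..<n. Pm $$ (i, s) * Qm $$ (s, j))"
      using i j unfolding Pm_def Qm_def by (simp add: scalar_prod_def)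
    also have "\<dots> = Am $$ (i, j)"
    proof (cases "i \<le> \<rho>")
      case True
      have "(\<Sum>s = 0..<n. Pm $$ (i, s) * Qm $$ (s, j)) = (\<Sum>s = 0..<\<rho>. C i s * V s j)"
      proof (rule sum.mono_neutral_cong_right)
        show "finite {0..<n}" by simp
        show "{0..<\<rho>} \<subseteq> {0..<n}" using rho by auto
        show "\<forall>s\<in>{0..<n} - {0..<\<rho>}. Pm $$ (i, s) * Qm $$ (s, j) = 0"
          using i True unfolding Pm_def by auto
        show "\<And>s. s \<in> {0..<\<rho>} \<Longrightarrow> Pm $$ (i, s) * Qm $$ (s, j) = C i s * V s j"
          using i j True rho unfolding Pm_def Qm_def by auto
      qed
      also have "\<dots> = Am $$ (i, j)"
        using rows[of i j] True j r1 unfolding \<rho>_def by (simp add: atLeast0LessThan)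
      finally show ?thesis .
    next
      case False
      have "(\<Sum>s = 0..<n. Pm $$ (i, s) * Qm $$ (s, j)) = (\<Sum>s = 0..<n. if s = i then Qm $$ (s, j) else 0)"
        by (rule sum.cong) (use i False in \<open>auto simp: Pm_def\<close>)
      also have "\<dots> = Qm $$ (i, j)" using i by (simp add: sum.delta')
      also have "\<dots> = Am $$ (i, j)" using i j False unfolding Qm_def by simp
      finally show ?thesis .
    qed
    finally show "Am $$ (i, j) = (Pm * Qm) $$ (i, j)" by simp
  qed
  have "det Qm = 0"
    by (rule det_zero_row_lemma[of Qm n \<rho>]) (use rho in \<open>auto simp: Qm_def\<close>)
  moreover have "det Am = det Pm * det Qm"
    unfolding PQ by (rule det_mult[of _ n]) (auto simp: Pm_def Qm_def)
  ultimately show ?thesis using sch unfolding xs_def ys_def by simp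
qed


end
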